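(* Let $(M,J)$ be an almost complex manifold (not necessarily integrable, not necessarily compact), and let $\phi^k:H^k_J(M)\to H^k_{dR}(M)$ be the natural map. Then $M$ satisfies the $\mathrm d\mathcal L_J$-lemma in degree $k$, i.e. $$(\operatorname{im}\mathcal L_J)^k\cap(\ker\mathrm d)^k=(\operatorname{im}\mathrm d\mathcal L_J)^k,$$ if and only if $\phi^k$ is injective and $\phi^{k-1}$ is surjective.
   Context: For a vector-valued $k$-form $K=K^je_j$ on $M$, $\iota_K\alpha=K^j\wedge(\iota_{e_j}\alpha)$ and $\mathcal L_K=\iota_K\mathrm d-(-1)^{k-1}\mathrm d\iota_K$. For an almost complex structure $J$ ($J^2=-I$), $\mathcal L_J$ has degree $1$ and $\mathrm d\mathcal L_J=-\mathcal L_J\mathrm d$, so $\mathrm d$ preserves $(\ker\mathcal L_J)^k=\{\alpha\in\Omega^k(M):\mathcal L_J\alpha=0\}$; $H^k_J(M)$ is the $k$-th cohomology of $((\ker\mathcal L_J)^\bullet,\mathrm d)$ and $\phi^k$ is induced by the inclusion into $\Omega^\bullet(M)$. Notation (real forms): $(\operatorname{im}\mathcal L_J)^k=\mathcal L_J(\Omega^{k-1}(M))$, $(\operatorname{im}\mathrm d\mathcal L_J)^k=\mathrm d\mathcal L_J(\Omega^{k-2}(M))$, $(\ker\mathrm d)^k$ the closed $k$-forms. *)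

theory Defs
  imports "HOL-Analysis.Analysis"
begin

text \<open>Abstract model of the complex of real differential forms on M:
  the total space of forms is a real vector space 'a, Om k is the subspace of k-forms
  (Om k = {0} for k < 0), d is the exterior derivative and L stands for \<L>_J.\<close>

definition forms_complex ::
  "(int \<Rightarrow> 'a::real_vector set) \<Rightarrow> ('a \<Rightarrow> 'a) \<Rightarrow> ('a \<Rightarrow> 'a) \<Rightarrow> bool" where
  "forms_complex Om d L \<longleftrightarrow>
     linear d \<and> linear L \<and>
     (\<forall>k. subspace (Om k)) \<and>
     (\<forall>k<0. Om k = {0}) \<and>
     (\<forall>k. d ` Om k \<subseteq> Om (k + 1)) \<and>
     (\<forall>k. L ` Om k \<subseteq> Om (k + 1)) \<and>
     (\<forall>k. \<forall>a\<in>Om k. d (d a) = 0) \<and>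
     (\<forall>k. \<forall>a\<in>Om k. d (L a) = - L (d a))"

definition cls :: "'a::real_vector \<Rightarrow> 'a set \<Rightarrow> 'a set" where
  "cls a S = (\<lambda>b. a + b) ` S"

definition kerL :: "(int \<Rightarrow> 'a::real_vector set) \<Rightarrow> ('a \<Rightarrow> 'a) \<Rightarrow> int \<Rightarrow> 'a set" where
  "kerL Om L k = {a \<in> Om k. L a = 0}"

definition HdR :: "(int \<Rightarrow> 'a::real_vector set) \<Rightarrow> ('a \<Rightarrow> 'a) \<Rightarrow> int \<Rightarrow> 'a set set" where
  "HdR Om d k = (\<lambda>a. cls a (d ` Om (k - 1))) ` {a \<in> Om k. d a = 0}"

definition HJ :: "(int \<Rightarrow> 'a::real_vector set) \<Rightarrow> ('a \<Rightarrow> 'a) \<Rightarrow> ('a \<Rightarrow> 'a) \<Rightarrow> int \<Rightarrow> 'a set set" where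
  "HJ Om d L k = (\<lambda>a. cls a (d ` kerL Om L (k - 1))) ` {a \<in> kerL Om L k. d a = 0}"

text \<open>phi^k : H^k_J \<rightarrow> H^k_dR induced by inclusion: send a class to the de Rham
  class of (any) representative.\<close>
definition phi :: "(int \<Rightarrow> 'a::real_vector set) \<Rightarrow> ('a \<Rightarrow> 'a) \<Rightarrow> int \<Rightarrow> 'a set \<Rightarrow> 'a set" where
  "phi Om d k C = cls (SOME a. a \<in> C) (d ` Om (k - 1))"

end

theory Submission
  imports Defs
begin

lemma cls_eq:
  assumes "subspace E"
  shows "cls x E = cls y E \<longleftrightarrow> x - y \<in> E"
proof
  assume h: "cls x E = cls y E"
  have "x \<in> cls x E" unfolding cls_def using subspace_0[OF assms] by force
  then have "x \<in> cls y E" using h by simp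
  then obtain e where "e \<in> E" "x = y + e" unfolding cls_def by auto
  then show "x - y \<in> E" by simp
next
  assume h: "x - y \<in> E"
  show "cls x E = cls y E"
  proof
    show "cls x E \<subseteq> cls y E"
    proof
      fix z assume "z \<in> cls x E"
      then obtain e where e: "e \<in> E" "z = x + e" unfolding cls_def by auto
      have "(x - y) + e \<in> E" using subspace_add[OF assms h e(1)] .
      moreover have "z = y + ((x - y) + e)" using e by simp
      ultimately show "z \<in> cls y E" unfolding cls_def by blast
    qed
  next
    show "cls y E \<subseteq> cls x E"
    proof
      fix z assume "z \<in> cls y E"
      then obtain e where e: "e \<in> E" "z = y + e" unfolding cls_def by auto
      have "- (x - y) \<in> E" using subspace_neg[OF assms h] .
      then have "- (x - y) + e \<in> E" using subspace_add[OF assms _ e(1)] by blast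
      moreover have "z = x + (- (x - y) + e)" using e by simp
      ultimately show "z \<in> cls x E" unfolding cls_def by blast
    qed
  qed
qed

lemma fc_facts:
  assumes "forms_complex Om d L"
  shows "linear d" "linear L" "subspace (Om k)" "\<And>a. a \<in> Om k \<Longrightarrow> d a \<in> Om (k+1)"
    "\<And>a. a \<in> Om k \<Longrightarrow> L a \<in> Om (k+1)" "\<And>a. a \<in> Om k \<Longrightarrow> d (d a) = 0"
    "\<And>a. a \<in> Om k \<Longrightarrow> d (L a) = - L (d a)"
  using assms unfolding forms_complex_def by (meson image_subset_iff)+

lemma kerL_sub:
  assumes "forms_complex Om d L"
  shows "subspace (kerL Om L k)"
proof -
  have s: "subspace (Om k)" and l: "linear L" using fc_facts[OF assms] by auto
  show ?thesis unfolding kerL_def subspace_def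
  proof (intro conjI ballI allI)
    show "0 \<in> {a \<in> Om k. L a = 0}" using subspace_0[OF s] linear_0[OF l] by simp
  next
    fix x y assume "x \<in> {a \<in> Om k. L a = 0}" "y \<in> {a \<in> Om k. L a = 0}"
    then show "x + y \<in> {a \<in> Om k. L a = 0}" using subspace_add[OF s] linear_add[OF l] by simp
  next
    fix c x assume "x \<in> {a \<in> Om k. L a = 0}"
    then show "c *\<^sub>R x \<in> {a \<in> Om k. L a = 0}" using subspace_mul[OF s] linear_scale[OF l] by simp
  qed
qed

lemma kerL_Om: "kerL Om L k \<subseteq> Om k" unfolding kerL_def by auto

lemma phi_rep:
  assumes fc: "forms_complex Om d L" and a: "a \<in> Om k"
  shows "phi Om d k (cls a (d ` kerL Om L (k - 1))) = cls a (d ` Om (k - 1))"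
proof -
  have ld: "linear d" using fc_facts[OF fc] by auto
  have E1: "subspace (d ` kerL Om L (k - 1))"
    using linear_subspace_image[OF ld kerL_sub[OF fc]] .
  have E2: "subspace (d ` Om (k - 1))"
    using linear_subspace_image[OF ld fc_facts(3)[OF fc]] .
  let ?C = "cls a (d ` kerL Om L (k - 1))"
  have "a \<in> ?C" unfolding cls_def using subspace_0[OF E1] by force
  then have "(SOME x. x \<in> ?C) \<in> ?C" by (rule someI)
  then obtain u where u: "u \<in> kerL Om L (k - 1)" "(SOME x. x \<in> ?C) = a + d u"
    unfolding cls_def by auto
  have "d u \<in> d ` Om (k - 1)" using u(1) kerL_Om by blast
  then show ?thesis unfolding phi_def u(2) using cls_eq[OF E2] by simp
qed

lemma inj_iff:
  assumes fc: "forms_complex Om d L"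
  shows "inj_on (phi Om d k) (HJ Om d L k) \<longleftrightarrow>
    (\<forall>g\<in>kerL Om L k. d g = 0 \<longrightarrow> g \<in> d ` Om (k - 1) \<longrightarrow> g \<in> d ` kerL Om L (k - 1))"
proof -
  have ld: "linear d" using fc_facts[OF fc] by auto
  have E1: "subspace (d ` kerL Om L (k - 1))"
    using linear_subspace_image[OF ld kerL_sub[OF fc]] .
  have E2: "subspace (d ` Om (k - 1))"
    using linear_subspace_image[OF ld fc_facts(3)[OF fc]] .
  have K: "subspace (kerL Om L k)" using kerL_sub[OF fc] .
  show ?thesis
  proof
    assume inj: "inj_on (phi Om d k) (HJ Om d L k)"
    show "\<forall>g\<in>kerL Om L k. d g = 0 \<longrightarrow> g \<in> d ` Om (k - 1) \<longrightarrow> g \<in> d ` kerL Om L (k - 1)"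
    proof (intro ballI impI)
      fix g assume g: "g \<in> kerL Om L k" "d g = 0" "g \<in> d ` Om (k - 1)"
      have 0: "(0::'a) \<in> kerL Om L k" using subspace_0[OF K] .
      have m1: "cls g (d ` kerL Om L (k - 1)) \<in> HJ Om d L k" unfolding HJ_def using g by blast
      have m2: "cls 0 (d ` kerL Om L (k - 1)) \<in> HJ Om d L k" unfolding HJ_def using 0 ld
        by (auto simp: linear_0)
      have "phi Om d k (cls g (d ` kerL Om L (k - 1))) = phi Om d k (cls 0 (d ` kerL Om L (k - 1)))"
        using phi_rep[OF fc] g(1) 0 kerL_Om cls_eq[OF E2] g(3) by (metis subsetD diff_zero)
      then have "cls g (d ` kerL Om L (k - 1)) = cls 0 (d ` kerL Om L (k - 1))"
        using inj m1 m2 by (meson inj_onD)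
      then show "g \<in> d ` kerL Om L (k - 1)" using cls_eq[OF E1] by simp
    qed
  next
    assume h: "\<forall>g\<in>kerL Om L k. d g = 0 \<longrightarrow> g \<in> d ` Om (k - 1) \<longrightarrow> g \<in> d ` kerL Om L (k - 1)"
    show "inj_on (phi Om d k) (HJ Om d L k)"
    proof (rule inj_onI)
      fix C1 C2 assume c1: "C1 \<in> HJ Om d L k" and c2: "C2 \<in> HJ Om d L k"
        and eq: "phi Om d k C1 = phi Om d k C2"
      obtain a1 where a1: "a1 \<in> kerL Om L k" "d a1 = 0" "C1 = cls a1 (d ` kerL Om L (k - 1))"
        using c1 unfolding HJ_def by auto
      obtain a2 where a2: "a2 \<in> kerL Om L k" "d a2 = 0" "C2 = cls a2 (d ` kerL Om L (k - 1))"
        using c2 unfolding HJ_def by auto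
      have "cls a1 (d ` Om (k - 1)) = cls a2 (d ` Om (k - 1))"
        using eq a1 a2 phi_rep[OF fc] kerL_Om by (metis subsetD)
      then have x: "a1 - a2 \<in> d ` Om (k - 1)" using cls_eq[OF E2] by simp
      have "a1 - a2 \<in> kerL Om L k" using subspace_diff[OF K a1(1) a2(1)] .
      moreover have "d (a1 - a2) = 0" using a1 a2 ld by (simp add: linear_diff)
      ultimately have "a1 - a2 \<in> d ` kerL Om L (k - 1)" using h x by blast
      then show "C1 = C2" using a1(3) a2(3) cls_eq[OF E1] by simp
    qed
  qed
qed

lemma surj_iff:
  assumes fc: "forms_complex Om d L"
  shows "phi Om d j ` HJ Om d L j = HdR Om d j \<longleftrightarrow>
    (\<forall>y\<in>Om j. d y = 0 \<longrightarrow> (\<exists>c\<in>kerL Om L j. d c = 0 \<and> y - c \<in> d ` Om (j - 1)))"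
proof -
  have ld: "linear d" using fc_facts[OF fc] by auto
  have E2: "subspace (d ` Om (j - 1))"
    using linear_subspace_image[OF ld fc_facts(3)[OF fc]] .
  have img: "phi Om d j ` HJ Om d L j = (\<lambda>a. cls a (d ` Om (j - 1))) ` {a \<in> kerL Om L j. d a = 0}"
    unfolding HJ_def image_image
  proof (rule image_cong[OF refl])
    fix x assume "x \<in> {a \<in> kerL Om L j. d a = 0}"
    then have "x \<in> Om j" using kerL_Om by blast
    then show "phi Om d j (cls x (d ` kerL Om L (j - 1))) = cls x (d ` Om (j - 1))"
      by (rule phi_rep[OF fc])
  qed
  show ?thesis
  proof
    assume h: "phi Om d j ` HJ Om d L j = HdR Om d j"
    show "\<forall>y\<in>Om j. d y = 0 \<longrightarrow> (\<exists>c\<in>kerL Om L j. d c = 0 \<and> y - c \<in> d ` Om (j - 1))"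
    proof (intro ballI impI)
      fix y assume y: "y \<in> Om j" "d y = 0"
      have "cls y (d ` Om (j - 1)) \<in> HdR Om d j" unfolding HdR_def using y by blast
      then have "cls y (d ` Om (j - 1)) \<in> (\<lambda>a. cls a (d ` Om (j - 1))) ` {a \<in> kerL Om L j. d a = 0}"
        using h img by simp
      then obtain c where c: "c \<in> kerL Om L j" "d c = 0" "cls y (d ` Om (j - 1)) = cls c (d ` Om (j - 1))"
        by (auto simp del: )
      then show "\<exists>c\<in>kerL Om L j. d c = 0 \<and> y - c \<in> d ` Om (j - 1)" using cls_eq[OF E2] by blast
    qed
  next
    assume h: "\<forall>y\<in>Om j. d y = 0 \<longrightarrow> (\<exists>c\<in>kerL Om L j. d c = 0 \<and> y - c \<in> d ` Om (j - 1))"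
    show "phi Om d j ` HJ Om d L j = HdR Om d j"
      unfolding img HdR_def
    proof
      show "(\<lambda>a. cls a (d ` Om (j - 1))) ` {a \<in> kerL Om L j. d a = 0}
            \<subseteq> (\<lambda>a. cls a (d ` Om (j - 1))) ` {a \<in> Om j. d a = 0}"
        using kerL_Om by blast
    next
      show "(\<lambda>a. cls a (d ` Om (j - 1))) ` {a \<in> Om j. d a = 0}
            \<subseteq> (\<lambda>a. cls a (d ` Om (j - 1))) ` {a \<in> kerL Om L j. d a = 0}"
      proof
        fix C assume "C \<in> (\<lambda>a. cls a (d ` Om (j - 1))) ` {a \<in> Om j. d a = 0}"
        then obtain y where y: "y \<in> Om j" "d y = 0" "C = cls y (d ` Om (j - 1))" by auto
        then obtain c where c: "c \<in> kerL Om L j" "d c = 0" "y - c \<in> d ` Om (j - 1)" using h by blast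
        then have "C = cls c (d ` Om (j - 1))" using y(3) cls_eq[OF E2] by simp
        then show "C \<in> (\<lambda>a. cls a (d ` Om (j - 1))) ` {a \<in> kerL Om L j. d a = 0}" using c by blast
      qed
    qed
  qed
qed

theorem theorem3p18:
  fixes Om :: "int \<Rightarrow> 'a::real_vector set" and d L :: "'a \<Rightarrow> 'a" and k :: int
  assumes "forms_complex Om d L"
  shows "(L ` Om (k - 1) \<inter> {a \<in> Om k. d a = 0} = (\<lambda>a. d (L a)) ` Om (k - 2))
     \<longleftrightarrow> (inj_on (phi Om d k) (HJ Om d L k) \<and>
          phi Om d (k - 1) ` HJ Om d L (k - 1) = HdR Om d (k - 1))"
proof -
  note fc = assms
  have ld: "linear d" and lL: "linear L" using fc_facts[OF fc] by auto
  have k2: "k - 1 - 1 = k - 2" "k - 2 + 1 = k - 1" "k - 1 + 1 = k" by simp_all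
  have dOm: "\<And>a j. a \<in> Om j \<Longrightarrow> d a \<in> Om (j+1)" using fc_facts[OF fc] by blast
  have LOm: "\<And>a j. a \<in> Om j \<Longrightarrow> L a \<in> Om (j+1)" using fc_facts[OF fc] by blast
  have dd: "\<And>a j. a \<in> Om j \<Longrightarrow> d (d a) = 0" using fc_facts[OF fc] by blast
  have dL: "\<And>a j. a \<in> Om j \<Longrightarrow> d (L a) = - L (d a)" using fc_facts[OF fc] by blast
  have sub: "\<And>j. subspace (Om j)" using fc_facts[OF fc] by blast
  show ?thesis
    unfolding inj_iff[OF fc] surj_iff[OF fc] k2
  proof
    assume lem: "L ` Om (k - 1) \<inter> {a \<in> Om k. d a = 0} = (\<lambda>a. d (L a)) ` Om (k - 2)"
    have lem': "\<And>b. b \<in> Om (k-1) \<Longrightarrow> d (L b) = 0 \<Longrightarrow> \<exists>c\<in>Om (k-2). L b = d (L c)"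
    proof -
      fix b assume b: "b \<in> Om (k-1)" "d (L b) = 0"
      have "L b \<in> Om k" using LOm[OF b(1)] k2 by simp
      then have "L b \<in> L ` Om (k - 1) \<inter> {a \<in> Om k. d a = 0}" using b by blast
      then show "\<exists>c\<in>Om (k-2). L b = d (L c)" using lem by auto
    qed
    show "(\<forall>g\<in>kerL Om L k. d g = 0 \<longrightarrow> g \<in> d ` Om (k - 1) \<longrightarrow> g \<in> d ` kerL Om L (k - 1)) \<and>
      (\<forall>y\<in>Om (k - 1). d y = 0 \<longrightarrow> (\<exists>c\<in>kerL Om L (k - 1). d c = 0 \<and> y - c \<in> d ` Om (k - 2)))"
    proof (intro conjI ballI impI)
      fix g assume g: "g \<in> kerL Om L k" "d g = 0" "g \<in> d ` Om (k - 1)"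
      then obtain b where b: "b \<in> Om (k-1)" "g = d b" by auto
      have "d (L b) = - L g" using dL[OF b(1)] b by simp
      also have "\<dots> = 0" using g(1) unfolding kerL_def by simp
      finally have "d (L b) = 0" .
      then obtain c where c: "c \<in> Om (k-2)" "L b = d (L c)" using lem' b(1) by blast
      have dc: "d c \<in> Om (k-1)" using dOm[OF c(1)] k2 by simp
      have "L (b + d c) = L b + L (d c)" using lL by (simp add: linear_add)
      also have "\<dots> = 0" using c dL[OF c(1)] by simp
      finally have "b + d c \<in> kerL Om L (k-1)" unfolding kerL_def
        using subspace_add[OF sub b(1) dc] by simp
      moreover have "d (b + d c) = g" using ld dd[OF c(1)] b by (simp add: linear_add)
      ultimately show "g \<in> d ` kerL Om L (k - 1)" by force
    next
      fix y assume y: "y \<in> Om (k-1)" "d y = 0"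
      have "d (L y) = 0" using dL[OF y(1)] y(2) lL by (simp add: linear_0)
      then obtain c where c: "c \<in> Om (k-2)" "L y = d (L c)" using lem' y(1) by blast
      have dc: "d c \<in> Om (k-1)" using dOm[OF c(1)] k2 by simp
      have "L (y + d c) = L y + L (d c)" using lL by (simp add: linear_add)
      also have "\<dots> = 0" using c dL[OF c(1)] by simp
      finally have "y + d c \<in> kerL Om L (k-1)" unfolding kerL_def
        using subspace_add[OF sub y(1) dc] by simp
      moreover have "d (y + d c) = 0" using ld dd[OF c(1)] y by (simp add: linear_add)
      moreover have "y - (y + d c) = d (- c)" using ld by (simp add: linear_neg)
      moreover have "- c \<in> Om (k-2)" using subspace_neg[OF sub c(1)] .
      ultimately show "\<exists>c\<in>kerL Om L (k - 1). d c = 0 \<and> y - c \<in> d ` Om (k - 2)" by blast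
    qed
  next
    assume h0: "(\<forall>g\<in>kerL Om L k. d g = 0 \<longrightarrow> g \<in> d ` Om (k - 1) \<longrightarrow> g \<in> d ` kerL Om L (k - 1)) \<and>
      (\<forall>y\<in>Om (k - 1). d y = 0 \<longrightarrow> (\<exists>c\<in>kerL Om L (k - 1). d c = 0 \<and> y - c \<in> d ` Om (k - 2)))"
    have h1: "\<And>g. g\<in>kerL Om L k \<Longrightarrow> d g = 0 \<Longrightarrow> g \<in> d ` Om (k - 1) \<Longrightarrow> g \<in> d ` kerL Om L (k - 1)"
      using h0 by blast
    have h2: "\<And>y. y\<in>Om (k - 1) \<Longrightarrow> d y = 0 \<Longrightarrow> (\<exists>c\<in>kerL Om L (k - 1). d c = 0 \<and> y - c \<in> d ` Om (k - 2))"
      using h0 by blast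
    show "L ` Om (k - 1) \<inter> {a \<in> Om k. d a = 0} = (\<lambda>a. d (L a)) ` Om (k - 2)"
    proof
      show "L ` Om (k - 1) \<inter> {a \<in> Om k. d a = 0} \<subseteq> (\<lambda>a. d (L a)) ` Om (k - 2)"
      proof
        fix a assume "a \<in> L ` Om (k - 1) \<inter> {a \<in> Om k. d a = 0}"
        then obtain b where b: "b \<in> Om (k-1)" "a = L b" "d a = 0" by auto
        have gOm: "d b \<in> Om k" using dOm[OF b(1)] k2 by simp
        have "L (d b) = - d (L b)" using dL[OF b(1)] by simp
        then have "L (d b) = 0" using b by simp
        then have "d b \<in> kerL Om L k" unfolding kerL_def using gOm by simp
        moreover have "d (d b) = 0" using dd[OF b(1)] .
        moreover have "d b \<in> d ` Om (k - 1)" using b(1) by blast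
        ultimately have "d b \<in> d ` kerL Om L (k - 1)" by (rule h1)
        then obtain c where c: "c \<in> kerL Om L (k-1)" "d b = d c" by auto
        have cOm: "c \<in> Om (k-1)" "L c = 0" using c(1) unfolding kerL_def by auto
        have yOm: "b - c \<in> Om (k-1)" using subspace_diff[OF sub b(1) cOm(1)] .
        have dy: "d (b - c) = 0" using c(2) ld by (simp add: linear_diff)
        have Ly: "L (b - c) = a" using cOm(2) b(2) lL by (simp add: linear_diff)
        obtain c' where c': "c' \<in> kerL Om L (k-1)" "b - c - c' \<in> d ` Om (k-2)"
          using h2[OF yOm dy] by blast
        obtain x where x: "x \<in> Om (k-2)" "b - c - c' = d x" using c'(2) by auto
        have "L c' = 0" using c'(1) unfolding kerL_def by simp
        have "L (b - c - c') = L (b - c) - L c'" using lL by (simp add: linear_diff)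
        then have "a = L (d x)" using Ly x(2) \<open>L c' = 0\<close> by simp
        also have "\<dots> = d (L (- x))" using dL[OF x(1)] lL ld by (simp add: linear_neg)
        finally show "a \<in> (\<lambda>a. d (L a)) ` Om (k - 2)" using subspace_neg[OF sub x(1)] by blast
      qed
    next
      show "(\<lambda>a. d (L a)) ` Om (k - 2) \<subseteq> L ` Om (k - 1) \<inter> {a \<in> Om k. d a = 0}"
      proof
        fix a assume "a \<in> (\<lambda>a. d (L a)) ` Om (k - 2)"
        then obtain x where x: "x \<in> Om (k-2)" "a = d (L x)" by auto
        have dx: "d x \<in> Om (k-1)" using dOm[OF x(1)] k2 by simp
        have Lx: "L x \<in> Om (k-1)" using LOm[OF x(1)] k2 by simp
        have "a = L (- d x)" using dL[OF x(1)] x(2) lL by (simp add: linear_neg)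
        moreover have "- d x \<in> Om (k-1)" using subspace_neg[OF sub dx] .
        moreover have "a \<in> Om k" using dOm[OF Lx] x(2) k2 by simp
        moreover have "d a = 0" using dd[OF Lx] x(2) by simp
        ultimately show "a \<in> L ` Om (k - 1) \<inter> {a \<in> Om k. d a = 0}" by blast
      qed
    qed
  qed
qed

end
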